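(* Let $\alpha\ge5$ and $g_\alpha(y)=\sum_{k,l\in\mathbb{Z}}\exp\!\big(-\tfrac{\pi\alpha}{y}(k^2+kl+(\tfrac14+y^2)l^2)\big)\cos\big(2\pi(ka_2(y)-la_1(y))\big)$ with $a_1(y)=\tfrac14+\tfrac1{16y^2}$, $a_2(y)=\tfrac12-\tfrac1{8y^2}$. Then $g_\alpha''(y)<0$ for all $y\in\big[\tfrac{\sqrt3}2,\tfrac{\sqrt3}2+\tfrac1{4\sqrt\alpha}\big]$. *)

theory Defs
  imports "HOL-Analysis.Analysis"
begin

definition a1 :: "real \<Rightarrow> real" where
  "a1 y = 1/4 + 1/(16 * y^2)"

definition a2 :: "real \<Rightarrow> real" where
  "a2 y = 1/2 - 1/(8 * y^2)"

text \<open>The lattice theta-type sum over (k,l) in Z x Z (absolutely convergent for y > 0, alpha > 0).\<close>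
definition g :: "real \<Rightarrow> real \<Rightarrow> real" where
  "g \<alpha> y = (\<Sum>\<^sub>\<infinity>(k,l)\<in>(UNIV :: (int \<times> int) set).
      exp (- (pi * \<alpha> / y) * (real_of_int k ^ 2 + real_of_int k * real_of_int l
                                + (1/4 + y^2) * real_of_int l ^ 2))
      * cos (2 * pi * (real_of_int k * a2 y - real_of_int l * a1 y)))"

end

theory Submission
  imports Defs "HOL-Library.Nat_Bijection"
begin



lemma abs_bound_summable:
  fixes G :: "'a \<Rightarrow> real"
  assumes "\<And>p. \<bar>G p\<bar> \<le> M p" "M summable_on A"
  shows "G summable_on A"
proof -
  have "(\<lambda>p. norm (G p)) summable_on A"
    by (rule summable_on_comparison_test[OF assms(2)]) (use assms(1) in auto)
  then show ?thesis by (rule abs_summable_summable)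
qed

definition enc :: "nat \<Rightarrow> int \<times> int" where
  "enc n = map_prod int_decode int_decode (prod_decode n)"

lemma bij_enc: "bij enc"
proof -
  have "bij (map_prod int_decode int_decode)"
    using bij_betw_map_prod[OF bij_int_decode bij_int_decode] by simp
  then show ?thesis unfolding enc_def
    using bij_comp[OF bij_prod_decode] by (simp add: comp_def)
qed

lemma enc_sums:
  fixes G :: "int \<times> int \<Rightarrow> real"
  assumes "\<And>p. \<bar>G p\<bar> \<le> M p" "M summable_on UNIV"
  shows "(\<lambda>n. G (enc n)) sums (\<Sum>\<^sub>\<infinity>p. G p)"
proof -
  have s: "G summable_on UNIV" using abs_bound_summable assms by blast
  have "(\<lambda>n. G (enc n)) summable_on UNIV"
    using summable_on_reindex_bij_betw[OF bij_enc] s by blast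
  moreover have "(\<Sum>\<^sub>\<infinity>n. G (enc n)) = (\<Sum>\<^sub>\<infinity>p. G p)"
    using infsum_reindex_bij_betw[OF bij_enc] by blast
  ultimately show ?thesis
    by (metis has_sum_imp_sums summable_iff_has_sum_infsum)
qed

lemma infsum_deriv:
  fixes F F' :: "int \<times> int \<Rightarrow> real \<Rightarrow> real" and Ma Mb :: "int \<times> int \<Rightarrow> real"
  assumes S: "open S" "convex S" "y \<in> S"
  and der: "\<And>p z. z \<in> S \<Longrightarrow> (F p has_real_derivative F' p z) (at z)"
  and b0: "\<And>p z. z \<in> S \<Longrightarrow> \<bar>F p z\<bar> \<le> Ma p" and s0: "Ma summable_on UNIV"
  and b1: "\<And>p z. z \<in> S \<Longrightarrow> \<bar>F' p z\<bar> \<le> Mb p" and s1: "Mb summable_on UNIV"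
  shows "((\<lambda>z. \<Sum>\<^sub>\<infinity>p. F p z) has_real_derivative (\<Sum>\<^sub>\<infinity>p. F' p y)) (at y)"
proof -
  have Mbnn: "\<bar>Mb p\<bar> \<le> Mb p" for p using b1[OF S(3), of p] by auto
  have sMb: "summable (\<lambda>n. Mb (enc n))"
    using enc_sums[OF Mbnn s1] sums_summable by blast
  have uc: "uniformly_convergent_on S (\<lambda>n x. \<Sum>i<n. F' (enc i) x)"
    by (rule Weierstrass_m_test'[OF _ sMb]) (use b1 in auto)
  have sF: "(\<lambda>n. F (enc n) z) sums (\<Sum>\<^sub>\<infinity>p. F p z)" if "z \<in> S" for z
    using enc_sums[of "\<lambda>p. F p z" Ma] b0[OF that] s0 by blast
  have sF': "(\<lambda>n. F' (enc n) y) sums (\<Sum>\<^sub>\<infinity>p. F' p y)"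
    using enc_sums[of "\<lambda>p. F' p y" Mb] b1[OF S(3)] s1 by blast
  have "((\<lambda>x. \<Sum>n. F (enc n) x) has_field_derivative (\<Sum>n. F' (enc n) y)) (at y)"
    apply (rule has_field_derivative_series'(2)[OF S(2) _ uc S(3)])
    using der has_field_derivative_at_within apply blast
    using sF S(3) sums_summable apply blast
    using S interior_open by blast
  then have "((\<lambda>x. \<Sum>n. F (enc n) x) has_field_derivative (\<Sum>\<^sub>\<infinity>p. F' p y)) (at y)"
    using sF' sums_unique by metis
  then show ?thesis
    by (rule has_field_derivative_transform_within_open[OF _ S(1) S(3)])
       (use sF sums_unique in metis)
qed




definition E :: "int \<times> int \<Rightarrow> real" where
  "E p = exp (- (\<bar>real_of_int (fst p)\<bar> + \<bar>real_of_int (snd p)\<bar>))"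

lemma exp_m1_le: "exp (-1::real) \<le> 1/2"
proof -
  have "2 \<le> exp (1::real)" using exp_ge_add_one_self[of 1] by simp
  then show ?thesis by (simp add: exp_minus field_simps)
qed

lemma sum1D: "(\<Sum>k\<in>{-int n..int n}. exp (- \<bar>real_of_int k\<bar>)) \<le> 3 - 4 * exp (- real (Suc n))"
proof (induction n)
  case 0
  then show ?case using exp_m1_le by simp
next
  case (Suc n)
  have eq: "{-int (Suc n)..int (Suc n)} = insert (int (Suc n)) (insert (-int (Suc n)) {-int n..int n})"
    by auto
  have "(\<Sum>k\<in>{-int (Suc n)..int (Suc n)}. exp (- \<bar>real_of_int k\<bar>))
      = exp (- real (Suc n)) + exp (- real (Suc n)) + (\<Sum>k\<in>{-int n..int n}. exp (- \<bar>real_of_int k\<bar>))"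
    unfolding eq by simp
  also have "\<dots> \<le> 2 * exp (- real (Suc n)) + 3 - 4 * exp (- real (Suc n))" using Suc by simp
  also have "\<dots> = 3 - 2 * exp (- real (Suc n))" by simp
  also have "\<dots> \<le> 3 - 4 * exp (- real (Suc (Suc n)))"
  proof -
    have "exp (- real (Suc (Suc n))) = exp (-1) * exp (- real (Suc n))"
      by (simp add: exp_add[symmetric])
    also have "\<dots> \<le> 1/2 * exp (- real (Suc n))"
      by (rule mult_right_mono[OF exp_m1_le]) simp
    finally show ?thesis by simp
  qed
  finally show ?case .
qed

lemma sum1D': "(\<Sum>k\<in>{-int n..int n}. exp (- \<bar>real_of_int k\<bar>)) \<le> 3"
  using sum1D[of n] by (smt (verit) exp_gt_zero)

lemma E_box: "sum E ({-int n..int n} \<times> {-int n..int n}) \<le> 9"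
proof -
  have "sum E ({-int n..int n} \<times> {-int n..int n})
     = (\<Sum>k\<in>{-int n..int n}. exp (- \<bar>real_of_int k\<bar>)) * (\<Sum>l\<in>{-int n..int n}. exp (- \<bar>real_of_int l\<bar>))"
    unfolding E_def by (simp add: sum_product sum.cartesian_product exp_add[symmetric] exp_diff split_def)
  also have "\<dots> \<le> 3 * 3"
    by (intro mult_mono sum1D') (auto intro: sum_nonneg)
  finally show ?thesis by simp
qed

lemma finite_in_box:
  assumes "finite (F :: (int \<times> int) set)"
  shows "\<exists>n. F \<subseteq> {-int n..int n} \<times> {-int n..int n}"
proof -
  define n where "n = Max (insert 0 ((\<lambda>p. nat \<bar>fst p\<bar> + nat \<bar>snd p\<bar>) ` F))"
  have "\<forall>p\<in>F. nat \<bar>fst p\<bar> + nat \<bar>snd p\<bar> \<le> n"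
    unfolding n_def using assms by (auto intro: Max_ge)
  then have "F \<subseteq> {-int n..int n} \<times> {-int n..int n}"
    by fastforce
  then show ?thesis by blast
qed

lemma E_nonneg: "0 \<le> E p" unfolding E_def by simp

lemma E_sum_le: "finite F \<Longrightarrow> sum E F \<le> 9"
proof -
  assume "finite F"
  then obtain n where n: "F \<subseteq> {-int n..int n} \<times> {-int n..int n}" using finite_in_box by blast
  have "sum E F \<le> sum E ({-int n..int n} \<times> {-int n..int n})"
    by (rule sum_mono2[OF _ n]) (auto simp: E_nonneg)
  with E_box[of n] show ?thesis by simp
qed

lemma E_summable: "E summable_on A"
proof -
  have "E summable_on UNIV"
    by (rule nonneg_bdd_above_summable_on) (auto simp: E_nonneg bdd_above_def intro!: exI[of _ 9] E_sum_le)
  then show ?thesis using summable_on_subset_banach by blast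
qed

lemma E_infsum: "(\<Sum>\<^sub>\<infinity>p\<in>A. E p) \<le> 9"
  by (rule infsum_le_finite_sums[OF E_summable]) (simp add: E_sum_le)




definition qq :: "real \<Rightarrow> real \<Rightarrow> real \<Rightarrow> real \<Rightarrow> real" where
  "qq x K L y = x * ((K + L/2)^2 / y + y * L^2)"
definition q1 :: "real \<Rightarrow> real \<Rightarrow> real \<Rightarrow> real \<Rightarrow> real" where
  "q1 x K L y = x * (L^2 - (K + L/2)^2 / y^2)"
definition q2 :: "real \<Rightarrow> real \<Rightarrow> real \<Rightarrow> real \<Rightarrow> real" where
  "q2 x K L y = 2 * x * (K + L/2)^2 / y^3"
definition ph :: "real \<Rightarrow> real \<Rightarrow> real \<Rightarrow> real" where
  "ph K L y = 2 * pi * (K * a2 y - L * a1 y)"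
definition ph1 :: "real \<Rightarrow> real \<Rightarrow> real \<Rightarrow> real" where
  "ph1 K L y = pi * (2*K + L) / (4 * y^3)"
definition ph2 :: "real \<Rightarrow> real \<Rightarrow> real \<Rightarrow> real" where
  "ph2 K L y = - 3 * pi * (2*K + L) / (4 * y^4)"

definition t0 :: "real \<Rightarrow> real \<Rightarrow> real \<Rightarrow> real \<Rightarrow> real" where
  "t0 x K L y = exp (- qq x K L y) * cos (ph K L y)"
definition t1 :: "real \<Rightarrow> real \<Rightarrow> real \<Rightarrow> real \<Rightarrow> real" where
  "t1 x K L y = exp (- qq x K L y) * (- q1 x K L y * cos (ph K L y) - ph1 K L y * sin (ph K L y))"
definition t2 :: "real \<Rightarrow> real \<Rightarrow> real \<Rightarrow> real \<Rightarrow> real" where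
  "t2 x K L y = exp (- qq x K L y) * ((q1 x K L y ^ 2 - q2 x K L y) * cos (ph K L y)
      + 2 * q1 x K L y * ph1 K L y * sin (ph K L y) - ph2 K L y * sin (ph K L y)
      - ph1 K L y ^ 2 * cos (ph K L y))"

lemma d_qq: "y \<noteq> 0 \<Longrightarrow> ((qq x K L) has_real_derivative q1 x K L y) (at y)"
  unfolding qq_def q1_def
  by (auto intro!: derivative_eq_intros simp: field_simps power2_eq_square)

lemma d_q1: "y \<noteq> 0 \<Longrightarrow> ((q1 x K L) has_real_derivative q2 x K L y) (at y)"
  unfolding q2_def q1_def
  by (auto intro!: derivative_eq_intros simp: field_simps power2_eq_square power3_eq_cube)

lemma d_ph: "y \<noteq> 0 \<Longrightarrow> ((ph K L) has_real_derivative ph1 K L y) (at y)"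
  unfolding ph_def ph1_def a1_def a2_def
  by (auto intro!: derivative_eq_intros simp: field_simps power2_eq_square power3_eq_cube)

lemma d_ph1: "y \<noteq> 0 \<Longrightarrow> ((ph1 K L) has_real_derivative ph2 K L y) (at y)"
  unfolding ph2_def ph1_def
  by (auto intro!: derivative_eq_intros simp: field_simps eval_nat_numeral)

lemma d_t0: "y \<noteq> 0 \<Longrightarrow> ((t0 x K L) has_real_derivative t1 x K L y) (at y)"
  unfolding t0_def t1_def
  by (auto intro!: derivative_eq_intros d_qq d_ph simp: field_simps)

lemma d_t1: "y \<noteq> 0 \<Longrightarrow> ((t1 x K L) has_real_derivative t2 x K L y) (at y)"
  unfolding t1_def t2_def
  by (auto intro!: derivative_eq_intros d_qq d_ph d_q1 d_ph1 simp: field_simps power2_eq_square)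

lemma g_eq: "g \<alpha> y = (\<Sum>\<^sub>\<infinity>p. t0 (pi * \<alpha>) (real_of_int (fst p)) (real_of_int (snd p)) y)"
proof -
  have X: "(case p of (k, l) \<Rightarrow> exp (- (pi * \<alpha> / y) * (real_of_int k ^ 2 + real_of_int k * real_of_int l
                                + (1/4 + y^2) * real_of_int l ^ 2))
      * cos (2 * pi * (real_of_int k * a2 y - real_of_int l * a1 y)))
     = t0 (pi * \<alpha>) (real_of_int (fst p)) (real_of_int (snd p)) y" for p
  proof (cases p)
    case (Pair k l)
    show ?thesis
    proof (cases "y = 0")
      case True then show ?thesis using Pair by (simp add: t0_def qq_def ph_def)
    next
      case False
      have "- (pi * \<alpha> / y) * (real_of_int k ^ 2 + real_of_int k * real_of_int l
                                + (1/4 + y^2) * real_of_int l ^ 2) = - qq (pi*\<alpha>) k l y"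
        unfolding qq_def using False by (simp add: field_simps power2_eq_square)
      then show ?thesis using Pair by (simp add: t0_def ph_def)
    qed
  qed
  show ?thesis unfolding g_def by (rule infsum_cong) (rule X)
qed




definition rr :: "real \<Rightarrow> real \<Rightarrow> real \<Rightarrow> real" where
  "rr K L y = (K + L/2)^2 / y + y * L^2"

lemma qq_rr: "qq x K L y = x * rr K L y" unfolding qq_def rr_def by simp

lemma int_abs_le_sq: "\<bar>real_of_int k\<bar> \<le> (real_of_int k)^2"
proof -
  have "\<bar>k\<bar> \<le> k^2"
    by (smt (verit, del_insts) abs_ge_self abs_le_self_iff abs_power_minus
    less_one power2_less_eq_zero_iff power_0_left power_one_right
    power_strict_increasing_iff)
  then show ?thesis by (metis of_int_abs of_int_le_iff of_int_power)
qed

lemma P_int: "\<bar>2 * real_of_int k + real_of_int l\<bar> \<le> (2 * real_of_int k + real_of_int l)^2"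
  using int_abs_le_sq[of "2*k+l"] by simp

lemma rr_nonneg: "0 < y \<Longrightarrow> 0 \<le> rr K L y" unfolding rr_def by simp

lemma rr_lower:
  assumes "4/5 \<le> y" "y \<le> 21/20"
  shows "(K^2 + L^2)/3 \<le> rr K L y"
proof -
  have a0: "y * (K + L/2)^2 \<le> (21/20) * (K + L/2)^2"
    using assms by (intro mult_right_mono) auto
  have a: "(K + L/2)^2/y \<ge> (20/21) * (K + L/2)^2"
    using assms a0 by (simp add: field_simps)
  have b: "y * L^2 \<ge> (4/5) * L^2" using assms by (intro mult_right_mono) auto
  have c: "(K^2 + L^2)/3 \<le> (20/21) * (K + L/2)^2 + (4/5) * L^2"
  proof -
    have "(20/21) * (K + L/2)^2 + (4/5) * L^2 - (K^2 + L^2)/3 = (13/21)*(K + 10/13*L)^2 + (74/105 - 100/273)*L^2"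
      by (simp add: power2_eq_square field_simps)
    moreover have "0 \<le> (13/21)*(K + 10/13*L)^2 + (74/105 - 100/273)*L^2" by simp
    ultimately show ?thesis by linarith
  qed
  show ?thesis unfolding rr_def using a b c by linarith
qed

context
  fixes y :: real
  assumes y: "4/5 \<le> y" "y \<le> 21/20"
begin

lemma yp: "0 < y" using y by simp

lemma inv_y: "1/y \<le> 5/4" using y yp by (simp add: field_simps)

lemma Ny: "0 \<le> (K + L/2)^2 / y" using yp by simp

lemma L2_le: "L^2 \<le> (5/4) * (y * L^2)"
proof -
  have "1 * L^2 \<le> ((5/4) * y) * L^2" using y by (intro mult_right_mono) auto
  then show ?thesis by simp
qed

lemma Ny2_le: "(K + L/2)^2 / y^2 \<le> (5/4) * ((K + L/2)^2 / y)"
proof -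
  have "(K + L/2)^2 / y^2 = (1/y) * ((K + L/2)^2 / y)" by (simp add: power2_eq_square)
  also have "\<dots> \<le> (5/4) * ((K + L/2)^2 / y)" by (rule mult_right_mono[OF inv_y Ny])
  finally show ?thesis .
qed

lemma Ny3_le: "(K + L/2)^2 / y^3 \<le> 2 * ((K + L/2)^2 / y)"
proof -
  have "(K + L/2)^2 / y^3 = (1/y)^2 * ((K + L/2)^2 / y)" by (simp add: power2_eq_square power3_eq_cube)
  also have "\<dots> \<le> (5/4)^2 * ((K + L/2)^2 / y)"
    by (rule mult_right_mono[OF _ Ny]) (use inv_y yp in \<open>auto intro: power_mono\<close>)
  also have "\<dots> \<le> 2 * ((K + L/2)^2 / y)" using Ny by (intro mult_right_mono) (auto simp: eval_nat_numeral)
  finally show ?thesis .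
qed

lemma Ny4_le: "(K + L/2)^2 / y^4 \<le> 2 * ((K + L/2)^2 / y)"
proof -
  have "(K + L/2)^2 / y^4 = (1/y)^3 * ((K + L/2)^2 / y)" by (simp add: eval_nat_numeral)
  also have "\<dots> \<le> (5/4)^3 * ((K + L/2)^2 / y)"
    by (rule mult_right_mono[OF _ Ny]) (use inv_y yp in \<open>auto intro: power_mono\<close>)
  also have "\<dots> \<le> 2 * ((K + L/2)^2 / y)" using Ny by (intro mult_right_mono) (auto simp: eval_nat_numeral)
  finally show ?thesis .
qed

lemma q1_bound: "0 \<le> x \<Longrightarrow> \<bar>q1 x K L y\<bar> \<le> 2 * x * rr K L y"
proof -
  assume x: "0 \<le> x"
  have "0 \<le> (K + L/2)^2 / y^2" by simp
  then have "\<bar>L^2 - (K + L/2)^2 / y^2\<bar> \<le> L^2 + (K + L/2)^2 / y^2" by (simp add: abs_le_iff)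
  also have "\<dots> \<le> (5/4) * rr K L y" using L2_le[of L] Ny2_le[of K L] distrib_left[of "5/4::real" "(K + L/2)^2 / y" "y * L^2"] unfolding rr_def by linarith
  also have "\<dots> \<le> 2 * rr K L y" using rr_nonneg[OF yp] by simp
  finally have "x * \<bar>L^2 - (K + L/2)^2 / y^2\<bar> \<le> x * (2 * rr K L y)" using x by (rule mult_left_mono)
  then show ?thesis unfolding q1_def using x
    by (simp add: abs_mult mult.assoc mult.left_commute)
qed

lemma q2_bound: "0 \<le> x \<Longrightarrow> 0 \<le> q2 x K L y \<and> q2 x K L y \<le> 4 * x * rr K L y"
proof -
  assume x: "0 \<le> x"
  have e: "q2 x K L y = 2 * x * ((K + L/2)^2 / y^3)" unfolding q2_def by simp
  have "0 \<le> q2 x K L y" unfolding e using x yp by simp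
  moreover
  have "q2 x K L y = 2 * x * ((K + L/2)^2 / y^3)" unfolding q2_def by simp
  moreover have "(K + L/2)^2 / y^3 \<le> 2 * rr K L y" using Ny3_le[of K L] yp unfolding rr_def
    by (smt (verit) mult_nonneg_nonneg zero_le_power2)
  moreover have "0 \<le> (K + L/2)^2 / y^3" using yp by simp
  ultimately show ?thesis using x mult_left_mono[of "(K + L/2)^2 / y^3" "2 * rr K L y" "2*x"]
    by (simp only:) (simp add: mult.assoc)
qed

lemma ph1_bound: "\<bar>2*K+L\<bar> \<le> (2*K+L)^2 \<Longrightarrow> \<bar>ph1 K L y\<bar> \<le> 8 * rr K L y"
proof -
  assume P: "\<bar>2*K+L\<bar> \<le> (2*K+L)^2"
  have "\<bar>ph1 K L y\<bar> = pi * \<bar>2*K+L\<bar> / (4 * y^3)" unfolding ph1_def using yp by (simp add: abs_mult)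
  also have "\<dots> \<le> pi * (2*K+L)^2 / (4 * y^3)" using P yp by (simp add: divide_right_mono)
  also have "\<dots> = pi * ((K + L/2)^2 / y^3)" by (simp add: power2_eq_square field_simps)
  also have "\<dots> \<le> 4 * (2 * ((K + L/2)^2 / y))"
    using Ny3_le pi_less_4 yp by (intro mult_mono) auto
  also have "\<dots> \<le> 8 * rr K L y" unfolding rr_def using yp by simp
  finally show ?thesis .
qed

lemma ph2_bound: "\<bar>2*K+L\<bar> \<le> (2*K+L)^2 \<Longrightarrow> \<bar>ph2 K L y\<bar> \<le> 24 * rr K L y"
proof -
  assume P: "\<bar>2*K+L\<bar> \<le> (2*K+L)^2"
  have "\<bar>ph2 K L y\<bar> = 3 * pi * \<bar>2*K+L\<bar> / (4 * y^4)" unfolding ph2_def using yp by (simp add: abs_mult)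
  also have "\<dots> \<le> 3 * pi * (2*K+L)^2 / (4 * y^4)" using P yp by (simp add: divide_right_mono)
  also have "\<dots> = 3 * pi * ((K + L/2)^2 / y^4)" by (simp add: power2_eq_square field_simps)
  also have "\<dots> \<le> 12 * (2 * ((K + L/2)^2 / y))"
    using Ny4_le pi_less_4 yp by (intro mult_mono) auto
  also have "\<dots> \<le> 24 * rr K L y" unfolding rr_def using yp by simp
  finally show ?thesis .
qed

end



lemma trig_comb: fixes a b c s :: real shows "\<bar>c\<bar> \<le> 1 \<Longrightarrow> \<bar>s\<bar> \<le> 1 \<Longrightarrow> \<bar>a * c + b * s\<bar> \<le> \<bar>a\<bar> + \<bar>b\<bar>"
proof -
  assume c: "\<bar>c\<bar> \<le> 1" and s: "\<bar>s\<bar> \<le> 1"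
  have "\<bar>a * c\<bar> \<le> \<bar>a\<bar>" using mult_left_le[of "\<bar>c\<bar>" "\<bar>a\<bar>"] c by (simp add: abs_mult)
  moreover have "\<bar>b * s\<bar> \<le> \<bar>b\<bar>" using mult_left_le[of "\<bar>s\<bar>" "\<bar>b\<bar>"] s by (simp add: abs_mult)
  ultimately show ?thesis by (smt (verit))
qed

lemma majorize:
  fixes x R a b c :: real
  assumes x: "15 \<le> x" and R: "D/3 \<le> R" "0 \<le> R" and abc: "0 \<le> a" "0 \<le> b" "0 \<le> c"
  shows "exp (-x*R) * (a + b*R + c*R^2) \<le> (a+b+2*c) * exp (-D)"
proof -
  have e1: "1 \<le> exp R" using R by simp
  have e2: "R \<le> exp R" using exp_ge_add_one_self[of R] by linarith
  have e3: "R^2 \<le> 2 * exp R" using exp_lower_Taylor_quadratic[OF R(2)] R by simp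
  have e0: "a \<le> a * exp R" using e1 abc(1) mult_left_mono[of 1 "exp R" a] by simp
  have "a + b*R + c*R^2 \<le> a * exp R + b * exp R + c * (2 * exp R)"
    using e0 e2 e3 abc by (intro add_mono mult_left_mono) auto
  also have "\<dots> = (a+b+2*c) * exp R" by (simp add: algebra_simps)
  finally have p: "a + b*R + c*R^2 \<le> (a+b+2*c) * exp R" .
  have "exp (-x*R) * (a + b*R + c*R^2) \<le> exp (-x*R) * ((a+b+2*c) * exp R)"
    using p by (simp add: mult_left_mono)
  also have "\<dots> = (a+b+2*c) * exp (-(x-1)*R)" by (simp add: algebra_simps exp_add[symmetric])
  also have "\<dots> \<le> (a+b+2*c) * exp (-D)"
  proof -
    have "D \<le> (x-1)*R"
    proof -
      have "D \<le> 3*R" using R by simp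
      also have "\<dots> \<le> (x-1)*R" using x R by (intro mult_right_mono) auto
      finally show ?thesis .
    qed
    then have "exp (-(x-1)*R) \<le> exp (-D)" by (simp add: algebra_simps)
    then show ?thesis using abc by (intro mult_left_mono) auto
  qed
  finally show ?thesis .
qed

context
  fixes y x :: real and k l :: int
  assumes y: "4/5 \<le> y" "y \<le> 21/20" and x: "0 \<le> x"
begin

lemma yp': "0 < y" using y by simp

lemma t0_bound: "\<bar>t0 x k l y\<bar> \<le> exp (- x * rr k l y)"
  unfolding t0_def qq_rr by (simp add: abs_mult mult_left_le)

lemma t1_bound: "\<bar>t1 x k l y\<bar> \<le> exp (- x * rr k l y) * ((2*x + 8) * rr k l y)"
proof -
  have "\<bar>- q1 x k l y * cos (ph k l y) - ph1 k l y * sin (ph k l y)\<bar>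
      = \<bar>(- q1 x k l y) * cos (ph k l y) + (- ph1 k l y) * sin (ph k l y)\<bar>" by simp
  also have "\<dots> \<le> \<bar>- q1 x k l y\<bar> + \<bar>- ph1 k l y\<bar>" by (rule trig_comb) auto
  also have "\<dots> = \<bar>q1 x k l y\<bar> + \<bar>ph1 k l y\<bar>" by simp
  also have "\<dots> \<le> 2 * x * rr k l y + 8 * rr k l y"
    using q1_bound[OF y x] ph1_bound[OF y P_int] by (intro add_mono) auto
  also have "\<dots> = (2*x + 8) * rr k l y" by (simp add: algebra_simps)
  finally show ?thesis unfolding t1_def qq_rr by (simp add: abs_mult mult_left_mono)
qed

lemma t2_bound: "\<bar>t2 x k l y\<bar> \<le> exp (- x * rr k l y) * ((4*x + 24) * rr k l y + (4*x^2 + 32*x + 64) * (rr k l y)^2)"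
proof -
  define a where "a = q1 x k l y"
  define b where "b = q2 x k l y"
  define c where "c = ph1 k l y"
  define d where "d = ph2 k l y"
  define R where "R = rr k l y"
  have R0: "0 \<le> R" unfolding R_def using rr_nonneg yp' by simp
  have ha: "\<bar>a\<bar> \<le> 2*x*R" unfolding a_def R_def using q1_bound[OF y x] .
  have hb: "0 \<le> b" "b \<le> 4*x*R" unfolding b_def R_def using q2_bound[OF y x] by auto
  have hc: "\<bar>c\<bar> \<le> 8*R" unfolding c_def R_def using ph1_bound[OF y P_int] .
  have hd: "\<bar>d\<bar> \<le> 24*R" unfolding d_def R_def using ph2_bound[OF y P_int] .
  have a2: "a^2 \<le> (2*x*R)^2" using ha by (metis abs_le_square_iff abs_of_nonneg R0 x mult_nonneg_nonneg zero_le_numeral)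
  have c2: "c^2 \<le> (8*R)^2" using hc by (metis abs_le_square_iff abs_of_nonneg R0 mult_nonneg_nonneg zero_le_numeral)
  have "\<bar>a\<bar>*\<bar>c\<bar> \<le> (2*x*R)*(8*R)" by (rule mult_mono[OF ha hc]) (use R0 x in auto)
  then have ac: "\<bar>2*a*c\<bar> \<le> 2 * (2*x*R) * (8*R)"
    by (simp add: abs_mult mult_ac)
  have "(a^2 - b)*cos (ph k l y) + 2 * a * c * sin (ph k l y) - d * sin (ph k l y) - c^2 * cos (ph k l y)
     = (a^2 - b - c^2) * cos (ph k l y) + (2*a*c - d) * sin (ph k l y)" by (simp add: algebra_simps)
  also have "\<bar>\<dots>\<bar> \<le> \<bar>a^2 - b - c^2\<bar> + \<bar>2*a*c - d\<bar>" by (rule trig_comb) auto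
  also have "\<dots> \<le> (a^2 + b + c^2) + (\<bar>2*a*c\<bar> + \<bar>d\<bar>)" using hb by (intro add_mono) (auto simp: abs_le_iff)
  also have "\<dots> \<le> ((2*x*R)^2 + 4*x*R + (8*R)^2) + (2 * (2*x*R) * (8*R) + 24*R)"
    using a2 hb c2 ac hd by (intro add_mono) auto
  also have "\<dots> = (4*x + 24) * R + (4*x^2 + 32*x + 64) * R^2" by (simp add: algebra_simps power2_eq_square)
  finally have "\<bar>(a^2 - b)*cos (ph k l y) + 2 * a * c * sin (ph k l y) - d * sin (ph k l y) - c^2 * cos (ph k l y)\<bar>
      \<le> (4*x + 24) * R + (4*x^2 + 32*x + 64) * R^2" .
  then show ?thesis unfolding t2_def qq_rr a_def[symmetric] b_def[symmetric] c_def[symmetric] d_def[symmetric] R_def[symmetric]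
    by (simp add: abs_mult mult_left_mono)
qed

lemma rr_lowerE: "(\<bar>real_of_int k\<bar> + \<bar>real_of_int l\<bar>) / 3 \<le> rr k l y"
proof -
  have "\<bar>real_of_int k\<bar> + \<bar>real_of_int l\<bar> \<le> (real_of_int k)^2 + (real_of_int l)^2"
    using int_abs_le_sq[of k] int_abs_le_sq[of l] by linarith
  then have "(\<bar>real_of_int k\<bar> + \<bar>real_of_int l\<bar>) / 3 \<le> ((real_of_int k)^2 + (real_of_int l)^2) / 3"
    by (rule divide_right_mono) simp
  then show ?thesis using rr_lower[OF y, of k l] by linarith
qed

end

lemma maj_gen:
  assumes x: "15 \<le> x" and y: "4/5 \<le> y" "y \<le> 21/20" and a: "0 \<le> a" "0 \<le> b" "0 \<le> c"
  and t: "\<bar>t\<bar> \<le> exp (- x * rr (real_of_int (fst p)) (real_of_int (snd p)) y) * (a + b * rr (real_of_int (fst p)) (real_of_int (snd p)) y + c * (rr (real_of_int (fst p)) (real_of_int (snd p)) y)^2)"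
  shows "\<bar>t\<bar> \<le> (a + b + 2*c) * E p"
proof -
  have "exp (- x * rr (real_of_int (fst p)) (real_of_int (snd p)) y) * (a + b * rr (real_of_int (fst p)) (real_of_int (snd p)) y + c * (rr (real_of_int (fst p)) (real_of_int (snd p)) y)^2)
     \<le> (a + b + 2*c) * exp (- (\<bar>real_of_int (fst p)\<bar> + \<bar>real_of_int (snd p)\<bar>))"
    using rr_lowerE[of y x "fst p" "snd p"] rr_nonneg[of y] x y a
    by (intro majorize) auto
  then show ?thesis using t unfolding E_def by linarith
qed

lemma maj_t0: "15 \<le> x \<Longrightarrow> 4/5 \<le> y \<Longrightarrow> y \<le> 21/20 \<Longrightarrow> \<bar>t0 x (real_of_int (fst p)) (real_of_int (snd p)) y\<bar> \<le> 1 * E p"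
  using maj_gen[of x y 1 0 0] t0_bound[of y x "fst p" "snd p"] by simp

lemma maj_t1: "15 \<le> x \<Longrightarrow> 4/5 \<le> y \<Longrightarrow> y \<le> 21/20 \<Longrightarrow> \<bar>t1 x (real_of_int (fst p)) (real_of_int (snd p)) y\<bar> \<le> (2*x+8) * E p"
  using maj_gen[of x y 0 "2*x+8" 0] t1_bound[of y x "fst p" "snd p"] by simp

lemma maj_t2: "15 \<le> x \<Longrightarrow> 4/5 \<le> y \<Longrightarrow> y \<le> 21/20 \<Longrightarrow>
   \<bar>t2 x (real_of_int (fst p)) (real_of_int (snd p)) y\<bar> \<le> ((4*x+24) + 2*(4*x^2 + 32*x + 64)) * E p"
  using maj_gen[of x y 0 "4*x+24" "4*x^2 + 32*x + 64"] t2_bound[of y x "fst p" "snd p"] by simp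




definition G1 :: "real \<Rightarrow> real \<Rightarrow> real" where
  "G1 x y = (\<Sum>\<^sub>\<infinity>p. t1 x (real_of_int (fst p)) (real_of_int (snd p)) y)"
definition G2 :: "real \<Rightarrow> real \<Rightarrow> real" where
  "G2 x y = (\<Sum>\<^sub>\<infinity>p. t2 x (real_of_int (fst p)) (real_of_int (snd p)) y)"

lemma deriv2_g:
  assumes a: "5 \<le> \<alpha>" and y: "y \<in> {4/5<..<21/20}"
  shows "deriv (deriv (g \<alpha>)) y = G2 (pi * \<alpha>) y"
proof -
  define x where "x = pi * \<alpha>"
  have x: "15 \<le> x" unfolding x_def using mult_mono[of 3 pi 5 \<alpha>] a pi_gt3 by simp
  define S :: "real set" where "S = {4/5<..<21/20}"
  have S: "open S" "convex S" unfolding S_def by auto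
  have Sb: "z \<in> S \<Longrightarrow> 4/5 \<le> z \<and> z \<le> 21/20 \<and> z \<noteq> 0" for z unfolding S_def by auto
  have gfun: "g \<alpha> = (\<lambda>z. \<Sum>\<^sub>\<infinity>p. t0 x (real_of_int (fst p)) (real_of_int (snd p)) z)"
    unfolding x_def using g_eq by blast
  have d1: "(g \<alpha> has_real_derivative G1 x z) (at z)" if z: "z \<in> S" for z
    unfolding gfun G1_def
    apply (rule infsum_deriv[OF S z, where Ma = "\<lambda>p. 1 * E p" and Mb = "\<lambda>p. (2*x+8) * E p"])
    using d_t0 Sb maj_t0 maj_t1 x E_summable summable_on_cmult_right[OF E_summable] by auto
  have dd: "deriv (g \<alpha>) z = G1 x z" if "z \<in> S" for z using d1[OF that] by (rule DERIV_imp_deriv)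
  have d2: "(G1 x has_real_derivative G2 x y) (at y)"
    unfolding G1_def[abs_def] G2_def
    apply (rule infsum_deriv[OF S, where Ma = "\<lambda>p. (2*x+8) * E p" and Mb = "\<lambda>p. ((4*x+24) + 2*(4*x^2 + 32*x + 64)) * E p"])
    using y S_def apply simp
    using d_t1 Sb maj_t1 maj_t2 x E_summable summable_on_cmult_right[OF E_summable] by auto
  have "(deriv (g \<alpha>) has_real_derivative G2 x y) (at y)"
    by (rule has_field_derivative_transform_within_open[OF d2 S(1)]) (use y S_def dd in auto)
  then show ?thesis unfolding x_def by (rule DERIV_imp_deriv)
qed




lemma ph_10: "ph 1 0 y = pi - pi/(4*y^2)"
  unfolding ph_def a2_def by (simp add: field_simps)
lemma ph_m10: "ph (-1) 0 y = -(pi - pi/(4*y^2))"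
  unfolding ph_def a2_def by (simp add: field_simps)
lemma ph_01: "ph 0 1 y = -(pi/2 + pi/(8*y^2))"
  unfolding ph_def a1_def by (simp add: field_simps)
lemma ph_0m1: "ph 0 (-1) y = pi/2 + pi/(8*y^2)"
  unfolding ph_def a1_def by (simp add: field_simps)
lemma ph_m11: "ph (-1) 1 y = -(pi + (pi/2 - pi/(8*y^2)))"
  unfolding ph_def a1_def a2_def by (simp add: field_simps)
lemma ph_1m1: "ph 1 (-1) y = pi + (pi/2 - pi/(8*y^2))"
  unfolding ph_def a1_def a2_def by (simp add: field_simps)

lemma t2_A:
  assumes "K = 1 \<or> K = -1" and y: "y \<noteq> 0"
  shows "t2 x K 0 y = exp (- x / y) * (- (x^2/y^4 - 2*x/y^3) * cos (pi/(4*y^2))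
      - x * pi * sin (pi/(4*y^2)) / y^5 + 3 * pi * sin (pi/(4*y^2)) / (2*y^4) + pi^2 * cos (pi/(4*y^2)) / (4*y^6))"
  using assms(1)
proof
  assume K: "K = 1"
  have c: "cos (ph 1 0 y) = - cos (pi/(4*y^2))" "sin (ph 1 0 y) = sin (pi/(4*y^2))" unfolding ph_10 by simp_all
  show ?thesis unfolding K t2_def c qq_def q1_def q2_def ph1_def ph2_def using y
    by (simp add: field_simps power2_eq_square eval_nat_numeral)
next
  assume K: "K = -1"
  have c: "cos (ph (-1) 0 y) = - cos (pi/(4*y^2))" "sin (ph (-1) 0 y) = - sin (pi/(4*y^2))" unfolding ph_m10 by simp_all
  show ?thesis unfolding K t2_def c qq_def q1_def q2_def ph1_def ph2_def using y
    by (simp add: field_simps power2_eq_square eval_nat_numeral)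
qed

lemma A_neg_u:
  fixes x u v s :: real
  assumes x: "15 \<le> x" and u: "1 \<le> u" "u^2 \<le> 4/3" and v: "1/2 \<le> v" "v \<le> 1" and s: "0 \<le> s" "s \<le> 1"
  shows "-(x^2*u^4 - 2*x*u^3)* v - x*pi* s *u^5 + 3*pi* s *u^4/2 + pi^2* v *u^6/4 \<le> - (x^2/4)"
proof -
  have xu: "15 \<le> x*u" using mult_mono[of 15 x 1 u] x u by simp
  have h0: "0 \<le> x^2*u^4 - 2*x*u^3"
  proof -
    have "x^2*u^4 - 2*x*u^3 = (x*u^3) * (x*u - 2)" by (simp add: algebra_simps power2_eq_square eval_nat_numeral)
    moreover have "0 \<le> x*u^3" using x u by simp
    ultimately show ?thesis using xu by simp
  qed
  have h1: "-(x^2*u^4 - 2*x*u^3)* v \<le> -(x^2*u^4 - 2*x*u^3)/2"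
  proof -
    have "(x^2*u^4 - 2*x*u^3)*(1/2) \<le> (x^2*u^4 - 2*x*u^3)* v" using mult_left_mono[OF v(1) h0] .
    then show ?thesis by (simp only: minus_mult_left)
  qed
  have h2: "0 \<le> x*pi* s *u^5" using x s u by simp
  have u4: "u^4 \<le> 16/9"
  proof -
    have "u^4 = (u^2)^2" by simp
    also have "\<dots> \<le> (4/3)^2" using u by (intro power_mono) auto
    finally show ?thesis by (simp add: power2_eq_square)
  qed
  have u6: "u^6 \<le> 64/27"
  proof -
    have "u^6 = (u^2)^3" by simp
    also have "\<dots> \<le> (4/3)^3" using u by (intro power_mono) auto
    finally show ?thesis by (simp add: eval_nat_numeral)
  qed
  have h3: "pi* s *u^4 \<le> 4*1*(16/9)"
    using pi_less_4 s u4 u by (intro mult_mono) auto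
  have h4: "pi^2* v *u^6 \<le> 16*1*(64/27)"
  proof -
    have "pi^2 \<le> 4^2" using pi_less_4 pi_gt_zero by (intro power_mono) auto
    then show ?thesis using v u6 u by (intro mult_mono) auto
  qed
  have h5: "x^2/2 - x \<le> x^2*u^4/2 - x*u^3"
  proof -
    have a: "u^3 \<le> u^4" using u mult_left_mono[of 1 u "u^3"] by (simp add: eval_nat_numeral)
    have b: "1 \<le> u^3" using u by simp
    have c: "x \<le> x^2/2" using x by (simp add: power2_eq_square)
    have "x*(u^3 - 1) \<le> x*(u^4 - 1)" using a x by (intro mult_left_mono) auto
    also have "\<dots> \<le> (x^2/2)*(u^4 - 1)" using c a b by (intro mult_right_mono) auto
    finally show ?thesis by (simp add: algebra_simps)
  qed
  have h6: "x^2/4 - x - 21 \<ge> 0"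
  proof -
    have "15 * (15/4 - 1) \<le> x * (x/4 - 1)" using x by (intro mult_mono) auto
    then show ?thesis by (simp add: power2_eq_square algebra_simps)
  qed
  show ?thesis using h1 h2 h3 h4 h5 h6 by (simp add: algebra_simps)
qed


lemma A_term:
  assumes x: "15 \<le> x" and y: "0 < y" "3/4 \<le> y^2" "y \<le> 1" and K: "K = 1 \<or> K = -1"
  shows "t2 x K 0 y \<le> - (x^2/4) * exp (- x / y)"
proof -
  define v where "v = cos (pi/(4*y^2))"
  define s where "s = sin (pi/(4*y^2))"
  define u where "u = 1/y"
  have arg: "0 \<le> pi/(4*y^2)" "pi/(4*y^2) \<le> pi/3"
  proof -
    show "0 \<le> pi/(4*y^2)" by simp
    have "1/(4*y^2) \<le> 1/3" using y by (simp add: field_simps)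
    then have "pi * (1/(4*y^2)) \<le> pi * (1/3)" by (intro mult_left_mono) auto
    then show "pi/(4*y^2) \<le> pi/3" by simp
  qed
  have v: "1/2 \<le> v" "v \<le> 1"
  proof -
    have "cos (pi/3) \<le> v" unfolding v_def by (rule cos_monotone_0_pi_le) (use arg in auto)
    then show "1/2 \<le> v" by (simp add: cos_60)
    show "v \<le> 1" unfolding v_def by simp
  qed
  have s: "0 \<le> s" "s \<le> 1"
  proof -
    show "0 \<le> s" unfolding s_def by (rule sin_ge_zero) (use arg pi_gt_zero in linarith)+
    show "s \<le> 1" unfolding s_def by simp
  qed
  have u: "1 \<le> u" "u^2 \<le> 4/3" unfolding u_def using y by (simp_all add: field_simps power_one_over)
  have eq: "-(x^2/y^4 - 2*x/y^3) * v - x * pi * s / y^5 + 3 * pi * s / (2*y^4) + pi^2 * v / (4*y^6)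
      = -(x^2*u^4 - 2*x*u^3)* v - x*pi* s *u^5 + 3*pi* s *u^4/2 + pi^2* v *u^6/4"
    unfolding u_def by (simp add: field_simps power_one_over)
  have b: "-(x^2/y^4 - 2*x/y^3) * v - x * pi * s / y^5 + 3 * pi * s / (2*y^4) + pi^2 * v / (4*y^6) \<le> - (x^2/4)"
    unfolding eq by (rule A_neg_u[OF x u v s])
  have "t2 x K 0 y = exp (- x / y) * (-(x^2/y^4 - 2*x/y^3) * v - x * pi * s / y^5 + 3 * pi * s / (2*y^4) + pi^2 * v / (4*y^6))"
    using y unfolding t2_A[OF K, of y x, OF order.strict_implies_not_eq[OF y(1), symmetric]] v_def s_def by (simp add: algebra_simps)
  also have "\<dots> \<le> exp (- x / y) * (- (x^2/4))" using b by (intro mult_left_mono) auto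
  finally show ?thesis by (simp add: mult.commute)
qed


lemma B_gen:
  fixes e c sn q1v q2v p1 p2 y :: real
  assumes e: "0 \<le> e" and y: "0 < y" and c: "c \<le> 0" and ps: "p1 * sn \<le> 0" and p2: "p2 = -(3/y) * p1"
    and q1: "0 \<le> q1v" and qq: "0 \<le> q1v^2 - q2v - p1^2"
  shows "e * ((q1v^2 - q2v) * c + 2 * q1v * p1 * sn - p2 * sn - p1^2 * c) \<le> 0"
proof -
  have "(q1v^2 - q2v) * c + 2 * q1v * p1 * sn - p2 * sn - p1^2 * c
      = (q1v^2 - q2v - p1^2) * c + 2 * q1v * (p1 * sn) + (3/y) * (p1 * sn)"
    unfolding p2 by (simp add: algebra_simps)
  also have "\<dots> \<le> 0"
  proof -
    have "(q1v^2 - q2v - p1^2) * c \<le> 0" using qq c by (simp add: mult_nonneg_nonpos)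
    moreover have "2 * q1v * (p1 * sn) \<le> 0" using q1 ps by (simp add: mult_nonneg_nonpos)
    moreover have "(3/y) * (p1 * sn) \<le> 0" using mult_nonneg_nonpos[of "3/y" "p1 * sn"] y ps by simp
    ultimately show ?thesis by linarith
  qed
  finally show ?thesis using e by (simp add: mult_nonneg_nonpos)
qed

lemma ph2_ph1: "y \<noteq> 0 \<Longrightarrow> ph2 K L y = -(3/y) * ph1 K L y"
  unfolding ph2_def ph1_def by (simp add: field_simps eval_nat_numeral)

lemma cs32: "cos (3*pi/2) = 0" "sin (3*pi/2) = -1"
proof -
  have e: "3*pi/2 = pi/2 + pi" by simp
  show "cos (3*pi/2) = 0" by (subst e, subst cos_periodic_pi, simp)
  show "sin (3*pi/2) = -1" by (subst e, subst sin_periodic_pi, simp)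
qed

lemma B_term:
  assumes x: "15 \<le> x" and y: "0 < y" "3/4 \<le> y^2" "y \<le> 1"
    and KL: "(K, L) \<in> {(0,1), (0,-1), (-1,1), (1,-1)}"
  shows "t2 x K L y \<le> 0"
proof -
  define h where "h = pi/(8*y^2)"
  have harg: "0 \<le> h" "h \<le> pi/2" unfolding h_def using y
    by (auto simp: field_simps intro!: mult_left_mono[of 1 "4*y^2" pi])
  have sh: "0 \<le> sin h" by (rule sin_ge_zero) (use harg pi_gt_zero in linarith)+
  have ch: "0 \<le> cos h" by (rule cos_ge_zero) (use harg pi_gt_zero in linarith)+
  have y34: "3/4 \<le> y"
  proof (rule ccontr)
    assume "\<not> 3/4 \<le> y"
    then have "y^2 < (3/4)^2" using y by (intro power_strict_mono) auto
    then show False using y by (simp add: power2_eq_square)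
  qed
  have N: "(K + L/2)^2 = 1/4" "L^2 = 1" using KL by (auto simp: power2_eq_square)
  have q1e: "q1 x K L y = x * (1 - 1/(4*y^2))" unfolding q1_def N by (simp add: field_simps)
  have q1ge: "2*x/3 \<le> q1 x K L y"
  proof -
    have "1/(4*y^2) \<le> 1/3" using y by (simp add: field_simps)
    then have "x * (2/3) \<le> x * (1 - 1/(4*y^2))" using x by (intro mult_left_mono) auto
    then show ?thesis unfolding q1e by simp
  qed
  have q2le: "q2 x K L y \<le> x"
  proof -
    have y3: "1/2 \<le> y^3"
    proof -
      have "(3/4) * (3/4) \<le> y * y^2" using y34 y by (intro mult_mono) auto
      then show ?thesis by (simp add: eval_nat_numeral)
    qed
    have "q2 x K L y = x / (2*y^3)" unfolding q2_def N by simp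
    also have "\<dots> \<le> x / 1" using y3 x y by (intro divide_left_mono) auto
    also have "\<dots> = x" by simp
    finally show ?thesis .
  qed
  have p1sq: "(ph1 K L y)^2 \<le> 3"
  proof -
    have P: "(2*K+L)^2 = 1" using KL by auto
    have d: "(4*y^3)^2 = 16 * (y^2)^3" by (simp add: eval_nat_numeral)
    have "(ph1 K L y)^2 = pi^2 * (2*K+L)^2 / (4*y^3)^2" unfolding ph1_def by (simp add: power_divide power_mult_distrib)
    also have "\<dots> = pi^2 / (16 * (y^2)^3)" unfolding P d by simp
    finally have "(ph1 K L y)^2 = pi^2 / (16 * (y^2)^3)" .
    also have "\<dots> \<le> 16 / (16 * (3/4)^3)"
    proof (rule frac_le)
      show "pi^2 \<le> 16" using pi_less_4 pi_gt_zero power_mono[of pi 4 2] by simp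
      show "0 < 16 * (3/4::real)^3" by simp
      show "16 * (3/4)^3 \<le> 16 * (y^2)^3" using y by (intro mult_left_mono power_mono) auto
    qed simp
    also have "\<dots> \<le> 3" by (simp add: eval_nat_numeral)
    finally show ?thesis .
  qed
  have qq: "0 \<le> (q1 x K L y)^2 - q2 x K L y - (ph1 K L y)^2"
  proof -
    have "(2*x/3)^2 \<le> (q1 x K L y)^2" using q1ge x by (intro power_mono) auto
    moreover have "x + 3 \<le> (2*x/3)^2"
    proof -
      have "15 * (4/9*15 - 1) \<le> x * (4/9*x - 1)" using x by (intro mult_mono) auto
      then show ?thesis by (simp add: power2_eq_square algebra_simps)
    qed
    ultimately show ?thesis using q2le p1sq by linarith
  qed
  have trig: "cos (ph K L y) = - sin h \<and> ph1 K L y * sin (ph K L y) \<le> 0"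
  proof -
    have p1pos: "0 < pi / (4 * y^3)" using y by simp
    from KL consider "K = 0 \<and> L = 1" | "K = 0 \<and> L = -1" | "K = -1 \<and> L = 1" | "K = 1 \<and> L = -1" by auto
    then show ?thesis
    proof cases
      case 1
      then show ?thesis unfolding h_def using 1 ph_01[of y] ch p1pos y unfolding h_def
        by (simp add: ph1_def cos_add sin_add cos_diff sin_diff zero_le_divide_iff cs32)
    next
      case 2
      then show ?thesis using ph_0m1[of y] ch p1pos y unfolding h_def
        by (simp add: ph1_def cos_add sin_add zero_le_divide_iff cs32)
    next
      case 3
      then show ?thesis using ph_m11[of y] ch p1pos y unfolding h_def
        by (simp add: ph1_def cos_add sin_add cos_diff sin_diff zero_le_divide_iff cs32)
    next
      case 4
      then show ?thesis using ph_1m1[of y] ch p1pos y unfolding h_def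
        by (simp add: ph1_def cos_add sin_add cos_diff sin_diff zero_le_divide_iff cs32)
    qed
  qed
  show ?thesis unfolding t2_def
    by (rule B_gen[OF _ y(1) _ _ ph2_ph1 _ qq]) (use trig sh q1ge x y in auto)
qed




definition Dset :: "(int \<times> int) set" where
  "Dset = {(0,0), (1,0), (-1,0), (0,1), (0,-1), (-1,1), (1,-1)}"

lemma int_tail:
  fixes k l :: int
  assumes "(k, l) \<notin> Dset"
  shows "(l = 0 \<and> 4 \<le> k^2) \<or> ((l = 1 \<or> l = -1) \<and> 9 \<le> (2*k+l)^2) \<or> 4 \<le> l^2"
proof -
  have sq: "4 \<le> z^2" if "2 \<le> \<bar>z\<bar>" for z :: int
  proof -
    have "2*2 \<le> \<bar>z\<bar>*\<bar>z\<bar>" using that by (intro mult_mono) auto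
    then show ?thesis by (simp add: power2_eq_square)
  qed
  have sq3: "9 \<le> z^2" if "3 \<le> \<bar>z\<bar>" for z :: int
  proof -
    have "3*3 \<le> \<bar>z\<bar>*\<bar>z\<bar>" using that by (intro mult_mono) auto
    then show ?thesis by (simp add: power2_eq_square)
  qed
  consider "l = 0" | "l = 1" | "l = -1" | "2 \<le> \<bar>l\<bar>" by linarith
  then show ?thesis
  proof cases
    case 1
    then have "2 \<le> \<bar>k\<bar>" using assms unfolding Dset_def by auto
    then show ?thesis using 1 sq by auto
  next
    case 2
    then have "3 \<le> \<bar>2*k+l\<bar>" using assms unfolding Dset_def by auto
    then show ?thesis using 2 sq3 by auto
  next
    case 3
    then have "3 \<le> \<bar>2*k+l\<bar>" using assms unfolding Dset_def by auto
    then show ?thesis using 3 sq3 by auto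
  next
    case 4
    then show ?thesis using sq by auto
  qed
qed

lemma rr_tail:
  assumes y: "0 < y" "3/4 \<le> y^2" "y \<le> 1" and p: "(k, l) \<notin> Dset"
  shows "3 \<le> rr (real_of_int k) (real_of_int l) y"
proof -
  define K where "K = real_of_int k"
  define L where "L = real_of_int l"
  have y34: "3/4 \<le> y"
  proof (rule ccontr)
    assume "\<not> 3/4 \<le> y"
    then have "y^2 < (3/4)^2" using y by (intro power_strict_mono) auto
    then show False using y by (simp add: power2_eq_square)
  qed
  have e: "(K + L/2)^2 = (2*K+L)^2/4" by (simp add: power2_eq_square field_simps)
  have a: "(2*K+L)^2/4 \<le> (K + L/2)^2 / y"
  proof -
    have "(K + L/2)^2 * 1 \<le> (K + L/2)^2 * (1/y)" using y by (intro mult_left_mono) (auto simp: field_simps)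
    then show ?thesis unfolding e by simp
  qed
  have rr: "(2*K+L)^2/4 + y * L^2 \<le> rr K L y" unfolding rr_def using a by simp
  have I: "(l = 0 \<and> 4 \<le> k^2) \<or> ((l = 1 \<or> l = -1) \<and> 9 \<le> (2*k+l)^2) \<or> 4 \<le> l^2"
    using int_tail[OF p] .
  have R: "(L = 0 \<and> 4 \<le> K^2) \<or> (L^2 = 1 \<and> 9 \<le> (2*K+L)^2) \<or> 4 \<le> L^2"
  proof -
    have c1: "4 \<le> K^2" if "4 \<le> k^2" using that unfolding K_def
      by (metis of_int_le_iff of_int_numeral of_int_power)
    have c2: "9 \<le> (2*K+L)^2" if "9 \<le> (2*k+l)^2" using that unfolding K_def L_def
      by (metis of_int_add of_int_le_iff of_int_mult of_int_numeral of_int_power)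
    have c3: "4 \<le> L^2" if "4 \<le> l^2" using that unfolding L_def
      by (metis of_int_le_iff of_int_numeral of_int_power)
    show ?thesis using I c1 c2 c3 unfolding K_def L_def by auto
  qed
  have yL: "0 \<le> y * L^2" using y by simp
  have "3 \<le> (2*K+L)^2/4 + y * L^2"
    using R
  proof (elim disjE conjE)
    assume "L = 0" "4 \<le> K^2"
    then show ?thesis by simp
  next
    assume "L^2 = 1" "9 \<le> (2*K+L)^2"
    then show ?thesis using y34 by simp
  next
    assume h: "4 \<le> L^2"
    have "(3/4) * 4 \<le> y * L^2" using y34 h by (intro mult_mono) auto
    moreover have "0 \<le> (2*K+L)^2/4" by simp
    ultimately show ?thesis by linarith
  qed
  then show ?thesis using rr unfolding K_def L_def by linarith
qed


lemma exp_big: "1600 \<le> exp (25/2::real)"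
proof -
  have a: "53/8 \<le> exp (5/2::real)" using exp_lower_Taylor_quadratic[of "5/2"] by (simp add: power2_eq_square)
  have "exp (25/2::real) = exp (5/2) ^ 5" using exp_of_nat_mult[of 5 "5/2::real"] by simp
  also have "\<dots> \<ge> (53/8)^5" using a by (intro power_mono) auto
  finally show ?thesis by (simp add: eval_nat_numeral)
qed

lemma tail_term:
  assumes x: "15 \<le> x" and y: "0 < y" "3/4 \<le> y^2" "y \<le> 1" and p: "(k, l) \<notin> Dset"
  shows "\<bar>t2 x (real_of_int k) (real_of_int l) y\<bar> \<le> (1/100 * x^2 * exp (- x / y)) * E (k, l)"
proof -
  define R where "R = rr (real_of_int k) (real_of_int l) y"
  define D where "D = \<bar>real_of_int k\<bar> + \<bar>real_of_int l\<bar>"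
  have y67: "6/7 \<le> y"
  proof (rule ccontr)
    assume "\<not> 6/7 \<le> y"
    then have "y^2 < (6/7)^2" using y by (intro power_strict_mono) auto
    then show False using y by (simp add: power2_eq_square)
  qed
  have R3: "3 \<le> R" unfolding R_def by (rule rr_tail[OF y p])
  have RD: "D/3 \<le> R" unfolding R_def D_def using rr_lowerE[of y x k l] y67 y x by simp
  have tb: "\<bar>t2 x (real_of_int k) (real_of_int l) y\<bar> \<le> exp (- x * R) * ((4*x + 24) * R + (4*x^2 + 32*x + 64) * R^2)"
    unfolding R_def using t2_bound[of y x k l] y67 y x by simp
  have poly: "(4*x + 24) * R + (4*x^2 + 32*x + 64) * R^2 \<le> 8*x^2 * R^2"
  proof -
    have "R * 3 \<le> R * R" using R3 by (intro mult_left_mono) auto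
    then have "(4*x+24) * R \<le> (4*x+24) * (R^2/3)" using x by (intro mult_left_mono) (auto simp: power2_eq_square)
    moreover have "(4*x+24)/3 + (4*x^2 + 32*x + 64) \<le> 8*x^2"
    proof -
      have "15 * (4*15 - 100/3) \<le> x * (4*x - 100/3)" using x by (intro mult_mono) auto
      then have h: "400 + (100/3)*x \<le> 4*x^2" by (simp add: power2_eq_square algebra_simps)
      have "(4*x+24)/3 + (4*x^2+32*x+64) = 4*x^2 + (100/3)*x + 72" by (simp add: field_simps)
      then show ?thesis using h by linarith
    qed
    then have "((4*x+24)/3 + (4*x^2 + 32*x + 64)) * R^2 \<le> 8*x^2 * R^2" by (intro mult_right_mono) auto
    moreover have "(4*x+24)*(R^2/3) + (4*x^2+32*x+64)*R^2 = ((4*x+24)/3 + (4*x^2+32*x+64))*R^2"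
      by (simp add: field_simps)
    ultimately show ?thesis by linarith
  qed
  have R2: "R^2 \<le> 2 * exp R" using exp_lower_Taylor_quadratic[of R] R3 by simp
  have iy: "1/y \<le> 7/6" using y67 y by (simp add: field_simps)
  have e1: "- x * R \<le> - x / y - 15 * (R - 1/y)"
  proof -
    have "0 \<le> R - 1/y" using R3 iy by linarith
    then have "15 * (R - 1/y) \<le> x * (R - 1/y)" using x by (intro mult_right_mono) auto
    then show ?thesis by (simp add: algebra_simps)
  qed
  have e2: "R - x / y - 15 * (R - 1/y) \<le> - x / y - D - 25/2"
  proof -
    have "15 * (1/y) \<le> 15 * (7/6)" using iy by simp
    then show ?thesis using RD R3 by (simp add: algebra_simps)
  qed
  have "\<bar>t2 x (real_of_int k) (real_of_int l) y\<bar> \<le> exp (- x * R) * (8*x^2 * R^2)"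
    using tb poly by (smt (verit) exp_gt_zero mult_left_mono)
  also have "\<dots> \<le> exp (- x / y - 15 * (R - 1/y)) * (8*x^2 * (2 * exp R))"
    using e1 R2 by (intro mult_mono) auto
  also have "\<dots> = 16 * x^2 * (exp R * exp (- x / y - 15 * (R - 1/y)))"
    by (simp add: mult_ac)
  also have "\<dots> = 16 * x^2 * exp (R - x / y - 15 * (R - 1/y))"
    by (simp only: exp_add[symmetric]) (simp add: algebra_simps)
  also have "\<dots> \<le> 16 * x^2 * exp (- x / y - D - 25/2)"
    using e2 by (intro mult_left_mono) auto
  also have "\<dots> = (16 / exp (25/2)) * x^2 * exp (- x / y) * exp (-D)"
  proof -
    have "exp (- x / y - D - 25/2) = exp (- x / y) * exp (-D) * exp (-(25/2))"
      by (simp only: exp_add[symmetric]) simp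
    then show ?thesis by (simp add: exp_minus field_simps)
  qed
  also have "\<dots> \<le> (1/100) * x^2 * exp (- x / y) * exp (-D)"
  proof -
    have "16 / exp (25/2::real) \<le> 1/100" using exp_big by (simp add: field_simps)
    then show ?thesis by (intro mult_right_mono) auto
  qed
  finally show ?thesis unfolding E_def D_def by simp
qed




lemma G2_neg:
  assumes x: "15 \<le> x" and y: "0 < y" "3/4 \<le> y^2" "y \<le> 1"
  shows "G2 x y < 0"
proof -
  define f where "f p = t2 x (real_of_int (fst p)) (real_of_int (snd p)) y" for p
  define C where "C = (4*x+24) + 2*(4*x^2 + 32*x + 64)"
  define c where "c = 1/100 * x^2 * exp (- x / y)"
  have y67: "6/7 \<le> y"
  proof (rule ccontr)
    assume "\<not> 6/7 \<le> y"
    then have "y^2 < (6/7)^2" using y by (intro power_strict_mono) auto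
    then show False using y by (simp add: power2_eq_square)
  qed
  have fb: "\<bar>f p\<bar> \<le> C * E p" for p unfolding f_def C_def using maj_t2[OF x, of y p] y67 y by simp
  have fs: "f summable_on A" for A
    by (rule abs_bound_summable[OF fb]) (rule summable_on_cmult_right[OF E_summable])
  have split: "G2 x y = infsum f Dset + infsum f (UNIV - Dset)"
  proof -
    have "G2 x y = infsum f (Dset \<union> (UNIV - Dset))" unfolding G2_def f_def by simp
    also have "\<dots> = infsum f Dset + infsum f (UNIV - Dset)"
      by (rule infsum_Un_disjoint[OF fs fs]) auto
    finally show ?thesis .
  qed
  have fD: "infsum f Dset = sum f Dset" by (simp add: Dset_def)
  have sD: "sum f Dset = f (0,0) + f (1,0) + f (-1,0) + f (0,1) + f (0,-1) + f (-1,1) + f (1,-1)"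
    unfolding Dset_def by (simp add: algebra_simps)
  have f00: "f (0,0) = 0" unfolding f_def by (simp add: t2_def q1_def q2_def ph1_def ph2_def)
  have fA1: "f (1,0) \<le> - (x^2/4) * exp (- x / y)" unfolding f_def using A_term[OF x y, of 1] by simp
  have fA2: "f (-1,0) \<le> - (x^2/4) * exp (- x / y)" unfolding f_def using A_term[OF x y, of "-1"] by simp
  have fB: "f (0,1) \<le> 0" "f (0,-1) \<le> 0" "f (-1,1) \<le> 0" "f (1,-1) \<le> 0"
    unfolding f_def using B_term[OF x y] by simp_all
  have tail: "infsum f (UNIV - Dset) \<le> 9 * c"
  proof -
    have "infsum f (UNIV - Dset) \<le> infsum (\<lambda>p. c * E p) (UNIV - Dset)"
    proof (rule infsum_mono[OF fs summable_on_cmult_right[OF E_summable]])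
      fix p assume "p \<in> UNIV - Dset"
      then have "(fst p, snd p) \<notin> Dset" by simp
      then have "\<bar>f p\<bar> \<le> c * E (fst p, snd p)" unfolding f_def c_def by (rule tail_term[OF x y])
      then show "f p \<le> c * E p" by simp
    qed
    also have "\<dots> = c * infsum E (UNIV - Dset)" by (rule infsum_cmult_right) (simp add: E_summable)
    also have "\<dots> \<le> c * 9" using E_infsum by (intro mult_left_mono) (auto simp: c_def)
    finally show ?thesis by simp
  qed
  have pos: "0 < x^2 * exp (- x / y)" using x by simp
  have "G2 x y \<le> - (x^2/4) * exp (- x / y) - (x^2/4) * exp (- x / y) + 9 * c"
    unfolding split fD sD using f00 fA1 fA2 fB tail by linarith
  also have "\<dots> = - (41/100) * (x^2 * exp (- x / y))" unfolding c_def by (simp add: algebra_simps)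
  also have "\<dots> < 0" using pos by simp
  finally show ?thesis .
qed


theorem mainTheorem19:
  fixes \<alpha> y :: real
  assumes "\<alpha> \<ge> 5"
    and "sqrt 3 / 2 \<le> y" and "y \<le> sqrt 3 / 2 + 1 / (4 * sqrt \<alpha>)"
  shows "deriv (deriv (g \<alpha>)) y < 0"
proof -
  have s3l: "8/5 < sqrt 3" by (rule real_less_rsqrt) (simp add: power2_eq_square)
  have s3u: "sqrt 3 \<le> 7/4"
  proof -
    have "sqrt 3 \<le> sqrt ((7/4)^2)" by (rule real_sqrt_le_mono) (simp add: power2_eq_square)
    then show ?thesis by simp
  qed
  have sa: "2 \<le> sqrt \<alpha>"
  proof -
    have "sqrt (2^2) \<le> sqrt \<alpha>" using assms(1) by (intro real_sqrt_le_mono) simp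
    then show ?thesis by simp
  qed
  have inv: "1 / (4 * sqrt \<alpha>) \<le> 1 / (4 * 2)" using sa assms(1) by (intro divide_left_mono) auto
  have y1: "4/5 < y" using s3l assms(2) by linarith
  have y2: "y \<le> 1" using s3u inv assms(3) by linarith
  have ysq: "3/4 \<le> y^2"
  proof -
    have "(sqrt 3 / 2)^2 \<le> y^2" using assms(2) by (intro power_mono) auto
    then show ?thesis by (simp add: power_divide)
  qed
  have x: "15 \<le> pi * \<alpha>" using mult_mono[of 3 pi 5 \<alpha>] assms(1) pi_gt3 by simp
  have "deriv (deriv (g \<alpha>)) y = G2 (pi * \<alpha>) y"
    by (rule deriv2_g[OF assms(1)]) (use y1 y2 in auto)
  also have "\<dots> < 0" using G2_neg[OF x _ ysq y2] y1 by simp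
  finally show ?thesis .
qed



end
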